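(* Consider a cooperative multi-agent Markov decision process with $N$ agents, finite individual state space $\mathcal S$, finite individual action space $\mathcal A$, joint state space $\mathcal S^N$, joint action space $\mathcal A^N$, transition kernel $\mathbb P$, shared reward $\mathrm r$ and discount factor $\gamma\in(0,1)$, and suppose that for every $(\mathbf s_t,\mathbf a_t)\in\mathcal S^N\times\mathcal A^N$, every $\mathbf s_{t+1}\in\mathcal S^N$ and every permutation $\kappa$ of the agent indices, $$\mathrm r(\mathbf s_t,\mathbf a_t)=\mathrm r(\kappa(\mathbf s_t),\kappa(\mathbf a_t)),\qquad \mathbb P(\mathbf s_{t+1}\mid \mathbf s_t,\mathbf a_t)=\mathbb P(\kappa(\mathbf s_{t+1})\mid \kappa(\mathbf s_t),\kappa(\mathbf a_t)).$$ Then (i) there exists an optimal policy $\nu^*$ that is permutation invariant, i.e. $\nu^*(\mathbf s,\mathbf a)=\nu^*(\kappa(\mathbf s),\kappa(\mathbf a))$ for every permutation $\kappa$; and (ii) for every permutation invariant policy $\nu$, the value function and state-action value function are permutation invariant: $V^\nu(\mathbf s)=V^\nu(\kappa(\mathbf s))$ and $Q^\nu(\mathbf s,\mathbf a)=Q^\nu(\kappa(\mathbf s),\kappa(\mathbf a))$ for all $\mathbf s,\mathbf a$ and all permutations $\kappa$.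
   Context: A permutation $\kappa$ of $\{1,\dots,N\}$ acts on $\mathbf s=(s_1,\dots,s_N)$ and $\mathbf a=(a_1,\dots,a_N)$ by permuting coordinates (the same permutation applied to states and actions). A (joint) policy $\nu$ assigns to each joint state $\mathbf s$ a distribution $\nu(\cdot\mid\mathbf s)$ over $\mathcal A^N$; we write $\nu(\mathbf s,\mathbf a)=\nu(\mathbf a\mid \mathbf s)$. The value function is $V^\nu(\mathbf s)=(1-\gamma)\mathbb E\{\sum_{t\ge0}\gamma^t\mathrm r(\mathbf s_t,\mathbf a_t)\mid \mathbf s_0=\mathbf s,\ \mathbf a_t\sim\nu(\cdot\mid\mathbf s_t)\ \forall t\ge 0\}$, and $Q^\nu(\mathbf s,\mathbf a)=\mathbb E_{\mathbf s'\sim\mathbb P(\cdot\mid\mathbf s,\mathbf a)}\{\mathrm r(\mathbf s,\mathbf a)+\gamma V^\nu(\mathbf s')\}$. An optimal policy is one maximizing $V^\nu(\mathbf s)$ for all $\mathbf s$. *)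

theory Defs
  imports "HOL-Analysis.Analysis"
begin

text \<open>Agents are indexed by a finite type 'n (N = CARD('n)); individual states 's and
actions 'a range over finite types. Joint states are 'n \<Rightarrow> 's, joint actions 'n \<Rightarrow> 'a.\<close>

text \<open>Action of a permutation kappa of the agent indices on a joint vector:
the entry of agent i is moved to position kappa i.\<close>
definition permute :: "('n \<Rightarrow> 'n) \<Rightarrow> ('n \<Rightarrow> 'b) \<Rightarrow> ('n \<Rightarrow> 'b)" where
  "permute \<kappa> x = (\<lambda>i. x (inv \<kappa> i))"

definition is_kernel ::
  "(('n::finite \<Rightarrow> 's::finite) \<Rightarrow> ('n \<Rightarrow> 'a::finite) \<Rightarrow> ('n \<Rightarrow> 's) \<Rightarrow> real) \<Rightarrow> bool" where
  "is_kernel P \<longleftrightarrow> (\<forall>s a s'. 0 \<le> P s a s') \<and> (\<forall>s a. (\<Sum>s'\<in>UNIV. P s a s') = 1)"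

text \<open>A (stationary, randomized, joint) policy: nu s a = nu(a | s).\<close>
definition is_policy ::
  "(('n::finite \<Rightarrow> 's::finite) \<Rightarrow> ('n \<Rightarrow> 'a::finite) \<Rightarrow> real) \<Rightarrow> bool" where
  "is_policy \<nu> \<longleftrightarrow> (\<forall>s a. 0 \<le> \<nu> s a) \<and> (\<forall>s. (\<Sum>a\<in>UNIV. \<nu> s a) = 1)"

fun state_dist ::
  "(('n::finite \<Rightarrow> 's::finite) \<Rightarrow> ('n \<Rightarrow> 'a::finite) \<Rightarrow> ('n \<Rightarrow> 's) \<Rightarrow> real) \<Rightarrow>
   (('n \<Rightarrow> 's) \<Rightarrow> ('n \<Rightarrow> 'a) \<Rightarrow> real) \<Rightarrow> ('n \<Rightarrow> 's) \<Rightarrow> nat \<Rightarrow> ('n \<Rightarrow> 's) \<Rightarrow> real" where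
  "state_dist P \<nu> s0 0 s = (if s = s0 then 1 else 0)"
| "state_dist P \<nu> s0 (Suc t) s' =
     (\<Sum>s\<in>UNIV. \<Sum>a\<in>UNIV. state_dist P \<nu> s0 t s * \<nu> s a * P s a s')"

definition expected_reward ::
  "(('n::finite \<Rightarrow> 's::finite) \<Rightarrow> ('n \<Rightarrow> 'a::finite) \<Rightarrow> ('n \<Rightarrow> 's) \<Rightarrow> real) \<Rightarrow>
   (('n \<Rightarrow> 's) \<Rightarrow> ('n \<Rightarrow> 'a) \<Rightarrow> real) \<Rightarrow>
   (('n \<Rightarrow> 's) \<Rightarrow> ('n \<Rightarrow> 'a) \<Rightarrow> real) \<Rightarrow> ('n \<Rightarrow> 's) \<Rightarrow> nat \<Rightarrow> real" where
  "expected_reward P r \<nu> s0 t =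
     (\<Sum>s\<in>UNIV. \<Sum>a\<in>UNIV. state_dist P \<nu> s0 t s * \<nu> s a * r s a)"

text \<open>V^nu(s) = (1-gamma) E[ sum_t gamma^t r(s_t,a_t) ] (expectation exchanged with the
absolutely convergent sum, rewards being bounded on the finite space).\<close>
definition value_fun ::
  "(('n::finite \<Rightarrow> 's::finite) \<Rightarrow> ('n \<Rightarrow> 'a::finite) \<Rightarrow> ('n \<Rightarrow> 's) \<Rightarrow> real) \<Rightarrow>
   (('n \<Rightarrow> 's) \<Rightarrow> ('n \<Rightarrow> 'a) \<Rightarrow> real) \<Rightarrow> real \<Rightarrow>
   (('n \<Rightarrow> 's) \<Rightarrow> ('n \<Rightarrow> 'a) \<Rightarrow> real) \<Rightarrow> ('n \<Rightarrow> 's) \<Rightarrow> real" where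
  "value_fun P r \<gamma> \<nu> s = (1 - \<gamma>) * (\<Sum>t. \<gamma> ^ t * expected_reward P r \<nu> s t)"

definition q_fun ::
  "(('n::finite \<Rightarrow> 's::finite) \<Rightarrow> ('n \<Rightarrow> 'a::finite) \<Rightarrow> ('n \<Rightarrow> 's) \<Rightarrow> real) \<Rightarrow>
   (('n \<Rightarrow> 's) \<Rightarrow> ('n \<Rightarrow> 'a) \<Rightarrow> real) \<Rightarrow> real \<Rightarrow>
   (('n \<Rightarrow> 's) \<Rightarrow> ('n \<Rightarrow> 'a) \<Rightarrow> real) \<Rightarrow> ('n \<Rightarrow> 's) \<Rightarrow> ('n \<Rightarrow> 'a) \<Rightarrow> real" where
  "q_fun P r \<gamma> \<nu> s a = (\<Sum>s'\<in>UNIV. P s a s' * (r s a + \<gamma> * value_fun P r \<gamma> \<nu> s'))"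

definition optimal_policy ::
  "(('n::finite \<Rightarrow> 's::finite) \<Rightarrow> ('n \<Rightarrow> 'a::finite) \<Rightarrow> ('n \<Rightarrow> 's) \<Rightarrow> real) \<Rightarrow>
   (('n \<Rightarrow> 's) \<Rightarrow> ('n \<Rightarrow> 'a) \<Rightarrow> real) \<Rightarrow> real \<Rightarrow>
   (('n \<Rightarrow> 's) \<Rightarrow> ('n \<Rightarrow> 'a) \<Rightarrow> real) \<Rightarrow> bool" where
  "optimal_policy P r \<gamma> \<nu> \<longleftrightarrow> is_policy \<nu> \<and>
     (\<forall>\<mu>. is_policy \<mu> \<longrightarrow> (\<forall>s. value_fun P r \<gamma> \<mu> s \<le> value_fun P r \<gamma> \<nu> s))"

definition perm_invariant_policy ::
  "(('n::finite \<Rightarrow> 's::finite) \<Rightarrow> ('n \<Rightarrow> 'a::finite) \<Rightarrow> real) \<Rightarrow> bool" where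
  "perm_invariant_policy \<nu> \<longleftrightarrow>
     (\<forall>\<kappa> s a. bij \<kappa> \<longrightarrow> \<nu> s a = \<nu> (permute \<kappa> s) (permute \<kappa> a))"

end

theory Submission
  imports Defs
begin


locale mdp =
  fixes P :: "('n::finite \<Rightarrow> 's::finite) \<Rightarrow> ('n \<Rightarrow> 'a::finite) \<Rightarrow> ('n \<Rightarrow> 's) \<Rightarrow> real"
    and r :: "('n \<Rightarrow> 's) \<Rightarrow> ('n \<Rightarrow> 'a) \<Rightarrow> real"
    and \<gamma> :: real
  assumes g0: "0 < \<gamma>" and g1: "\<gamma> < 1" and ker: "is_kernel P"
begin

lemma P_nn: "0 \<le> P s a s'" using ker unfolding is_kernel_def by auto
lemma P_sum: "(\<Sum>s'\<in>UNIV. P s a s') = 1" using ker unfolding is_kernel_def by auto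

definition M :: "(('n \<Rightarrow> 's) \<Rightarrow> ('n \<Rightarrow> 'a) \<Rightarrow> real) \<Rightarrow> ('n \<Rightarrow> 's) \<Rightarrow> ('n \<Rightarrow> 's) \<Rightarrow> real" where
  "M \<nu> s s' = (\<Sum>a\<in>UNIV. \<nu> s a * P s a s')"

lemma sd_step:
  "state_dist P \<nu> s0 (Suc t) x = (\<Sum>s'\<in>UNIV. M \<nu> s0 s' * state_dist P \<nu> s' t x)"
proof (induction t arbitrary: x)
  case 0
  have "state_dist P \<nu> s0 (Suc 0) x = (\<Sum>s\<in>UNIV. if s = s0 then (\<Sum>a\<in>UNIV. \<nu> s a * P s a x) else 0)"
    unfolding state_dist.simps by (rule sum.cong[OF refl]) auto
  also have "\<dots> = M \<nu> s0 x" by (simp add: M_def)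
  also have "\<dots> = (\<Sum>s'\<in>UNIV. if s' = x then M \<nu> s0 s' else 0)" by simp
  also have "\<dots> = (\<Sum>s'\<in>UNIV. M \<nu> s0 s' * state_dist P \<nu> s' 0 x)"
    by (rule sum.cong[OF refl]) auto
  finally show ?case .
next
  case (Suc t)
  have "state_dist P \<nu> s0 (Suc (Suc t)) x =
     (\<Sum>s\<in>UNIV. \<Sum>a\<in>UNIV. (\<Sum>s'\<in>UNIV. M \<nu> s0 s' * state_dist P \<nu> s' t s) * \<nu> s a * P s a x)"
    by (subst state_dist.simps(2)) (simp only: Suc.IH)
  also have "\<dots> = (\<Sum>s\<in>UNIV. \<Sum>a\<in>UNIV. \<Sum>s'\<in>UNIV. M \<nu> s0 s' * (state_dist P \<nu> s' t s * \<nu> s a * P s a x))"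
    by (simp add: sum_distrib_right mult.assoc)
  also have "\<dots> = (\<Sum>s'\<in>UNIV. \<Sum>s\<in>UNIV. \<Sum>a\<in>UNIV. M \<nu> s0 s' * (state_dist P \<nu> s' t s * \<nu> s a * P s a x))"
    by (subst sum.swap, rule sum.cong[OF refl], rule sum.swap)
  also have "\<dots> = (\<Sum>s'\<in>UNIV. M \<nu> s0 s' * state_dist P \<nu> s' (Suc t) x)"
    by (simp add: sum_distrib_left)
  finally show ?case .
qed

definition Qf where "Qf W s a = (1 - \<gamma>) * r s a + \<gamma> * (\<Sum>s'\<in>UNIV. P s a s' * W s')"
definition Tp where "Tp \<nu> W s = (\<Sum>a\<in>UNIV. \<nu> s a * Qf W s a)"

context fixes \<nu> :: "('n \<Rightarrow> 's) \<Rightarrow> ('n \<Rightarrow> 'a) \<Rightarrow> real" assumes pol: "is_policy \<nu>"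
begin
lemma nu_nn: "0 \<le> \<nu> s a" using pol unfolding is_policy_def by auto
lemma nu_sum: "(\<Sum>a\<in>UNIV. \<nu> s a) = 1" using pol unfolding is_policy_def by auto
lemma nu_le1: "\<nu> s a \<le> 1"
proof -
  have "\<nu> s a \<le> (\<Sum>a\<in>UNIV. \<nu> s a)" by (rule member_le_sum) (auto simp: nu_nn)
  then show ?thesis by (simp add: nu_sum)
qed

lemma sd_nn: "0 \<le> state_dist P \<nu> s0 t s"
  by (induction t arbitrary: s) (auto intro!: sum_nonneg mult_nonneg_nonneg simp: nu_nn P_nn)

lemma sd_sum: "(\<Sum>s\<in>UNIV. state_dist P \<nu> s0 t s) = 1"
proof (induction t)
  case 0 then show ?case by simp
next
  case (Suc t)
  have "(\<Sum>x\<in>UNIV. state_dist P \<nu> s0 (Suc t) x)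
     = (\<Sum>x\<in>UNIV. \<Sum>s\<in>UNIV. \<Sum>a\<in>UNIV. state_dist P \<nu> s0 t s * \<nu> s a * P s a x)" by simp
  also have "\<dots> = (\<Sum>s\<in>UNIV. \<Sum>a\<in>UNIV. \<Sum>x\<in>UNIV. state_dist P \<nu> s0 t s * \<nu> s a * P s a x)"
    by (subst sum.swap, rule sum.cong[OF refl], rule sum.swap)
  also have "\<dots> = (\<Sum>s\<in>UNIV. \<Sum>a\<in>UNIV. state_dist P \<nu> s0 t s * \<nu> s a * (\<Sum>x\<in>UNIV. P s a x))"
    by (simp only: sum_distrib_left)
  also have "\<dots> = (\<Sum>s\<in>UNIV. state_dist P \<nu> s0 t s * (\<Sum>a\<in>UNIV. \<nu> s a))"
    by (simp add: P_sum sum_distrib_left)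
  also have "\<dots> = 1" by (simp add: nu_sum Suc)
  finally show ?case .
qed

lemma sd_le1: "state_dist P \<nu> s0 t s \<le> 1"
proof -
  have "state_dist P \<nu> s0 t s \<le> (\<Sum>s\<in>UNIV. state_dist P \<nu> s0 t s)"
    by (rule member_le_sum) (auto simp: sd_nn)
  then show ?thesis by (simp add: sd_sum)
qed

definition B where "B = (\<Sum>s\<in>UNIV. \<Sum>a\<in>UNIV. \<bar>r s a\<bar>)"

lemma ER_bound: "\<bar>expected_reward P r \<nu> s0 t\<bar> \<le> B"
  unfolding expected_reward_def B_def
proof -
  have "\<bar>\<Sum>s\<in>UNIV. \<Sum>a\<in>UNIV. state_dist P \<nu> s0 t s * \<nu> s a * r s a\<bar>
     \<le> (\<Sum>s\<in>UNIV. \<Sum>a\<in>UNIV. \<bar>state_dist P \<nu> s0 t s * \<nu> s a * r s a\<bar>)"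
    by (rule order.trans[OF sum_abs sum_mono]) (rule sum_abs)
  also have "\<dots> \<le> (\<Sum>s\<in>UNIV. \<Sum>a\<in>UNIV. \<bar>r s a\<bar>)"
  proof (intro sum_mono)
    fix s a
    have "\<bar>state_dist P \<nu> s0 t s * \<nu> s a\<bar> \<le> 1"
      using sd_nn[of s0 t s] sd_le1[of s0 t s] nu_nn[of s a] nu_le1[of s a]
      by (simp add: abs_mult mult_le_one)
    then show "\<bar>state_dist P \<nu> s0 t s * \<nu> s a * r s a\<bar> \<le> \<bar>r s a\<bar>"
      by (simp add: abs_mult mult_left_le_one_le)
  qed
  finally show "\<bar>\<Sum>s\<in>UNIV. \<Sum>a\<in>UNIV. state_dist P \<nu> s0 t s * \<nu> s a * r s a\<bar> \<le> (\<Sum>s\<in>UNIV. \<Sum>a\<in>UNIV. \<bar>r s a\<bar>)" .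
qed

lemma summ: "summable (\<lambda>t. \<gamma> ^ t * expected_reward P r \<nu> s0 t)"
proof (rule summable_comparison_test')
  show "summable (\<lambda>t. \<gamma> ^ t * B)" using g0 g1 by (intro summable_mult2 summable_geometric) simp
  fix t :: nat
  show "norm (\<gamma> ^ t * expected_reward P r \<nu> s0 t) \<le> \<gamma> ^ t * B"
    using ER_bound[of s0 t] g0 by (simp add: abs_mult mult_left_mono)
qed


lemma ER0: "expected_reward P r \<nu> s0 0 = (\<Sum>a\<in>UNIV. \<nu> s0 a * r s0 a)"
proof -
  have "expected_reward P r \<nu> s0 0 = (\<Sum>s\<in>UNIV. if s = s0 then (\<Sum>a\<in>UNIV. \<nu> s a * r s a) else 0)"
    unfolding expected_reward_def state_dist.simps by (rule sum.cong[OF refl]) auto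
  then show ?thesis by simp
qed

lemma ER_step: "expected_reward P r \<nu> s0 (Suc t) = (\<Sum>s'\<in>UNIV. M \<nu> s0 s' * expected_reward P r \<nu> s' t)"
proof -
  have "expected_reward P r \<nu> s0 (Suc t) =
     (\<Sum>s\<in>UNIV. \<Sum>a\<in>UNIV. (\<Sum>s'\<in>UNIV. M \<nu> s0 s' * state_dist P \<nu> s' t s) * \<nu> s a * r s a)"
    unfolding expected_reward_def by (simp only: sd_step)
  also have "\<dots> = (\<Sum>s\<in>UNIV. \<Sum>a\<in>UNIV. \<Sum>s'\<in>UNIV. M \<nu> s0 s' * (state_dist P \<nu> s' t s * \<nu> s a * r s a))"
    by (simp add: sum_distrib_right mult.assoc)
  also have "\<dots> = (\<Sum>s'\<in>UNIV. \<Sum>s\<in>UNIV. \<Sum>a\<in>UNIV. M \<nu> s0 s' * (state_dist P \<nu> s' t s * \<nu> s a * r s a))"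
    by (subst sum.swap, rule sum.cong[OF refl], rule sum.swap)
  also have "\<dots> = (\<Sum>s'\<in>UNIV. M \<nu> s0 s' * expected_reward P r \<nu> s' t)"
    by (simp add: sum_distrib_left expected_reward_def)
  finally show ?thesis .
qed

lemma bellman: "value_fun P r \<gamma> \<nu> s0 = Tp \<nu> (value_fun P r \<gamma> \<nu>) s0"
proof -
  define f where "f s t = \<gamma> ^ t * expected_reward P r \<nu> s t" for s t
  define S where "S s = suminf (f s)" for s
  have sf: "summable (f s)" for s unfolding f_def by (rule summ)
  have V: "value_fun P r \<gamma> \<nu> s = (1 - \<gamma>) * S s" for s
    unfolding value_fun_def S_def f_def ..
  have fS: "f s0 (Suc t) = \<gamma> * (\<Sum>s'\<in>UNIV. M \<nu> s0 s' * f s' t)" for t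
    unfolding f_def ER_step by (simp add: sum_distrib_left mult_ac)
  have "S s0 = f s0 0 + (\<Sum>t. f s0 (Suc t))"
    unfolding S_def using suminf_split_head[OF sf[of s0]] by simp
  also have "(\<Sum>t. f s0 (Suc t)) = \<gamma> * (\<Sum>s'\<in>UNIV. M \<nu> s0 s' * S s')"
  proof -
    have "(\<Sum>t. f s0 (Suc t)) = (\<Sum>t. \<gamma> * (\<Sum>s'\<in>UNIV. M \<nu> s0 s' * f s' t))" by (simp only: fS)
    also have "\<dots> = \<gamma> * (\<Sum>t. (\<Sum>s'\<in>UNIV. M \<nu> s0 s' * f s' t))"
      by (rule suminf_mult) (intro summable_sum summable_mult sf)
    also have "(\<Sum>t. (\<Sum>s'\<in>UNIV. M \<nu> s0 s' * f s' t)) = (\<Sum>s'\<in>UNIV. \<Sum>t. M \<nu> s0 s' * f s' t)"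
      by (rule suminf_sum) (intro summable_mult sf)
    also have "\<dots> = (\<Sum>s'\<in>UNIV. M \<nu> s0 s' * S s')"
      unfolding S_def by (intro sum.cong refl suminf_mult sf)
    finally show ?thesis .
  qed
  finally have S0: "S s0 = f s0 0 + \<gamma> * (\<Sum>s'\<in>UNIV. M \<nu> s0 s' * S s')" .
  have "Tp \<nu> (value_fun P r \<gamma> \<nu>) s0
      = (1 - \<gamma>) * (\<Sum>a\<in>UNIV. \<nu> s0 a * r s0 a)
        + \<gamma> * (\<Sum>a\<in>UNIV. \<Sum>s'\<in>UNIV. \<nu> s0 a * P s0 a s' * value_fun P r \<gamma> \<nu> s')"
  proof -
    have "Tp \<nu> (value_fun P r \<gamma> \<nu>) s0 = (\<Sum>a\<in>UNIV. (1 - \<gamma>) * (\<nu> s0 a * r s0 a)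
        + \<gamma> * (\<Sum>s'\<in>UNIV. \<nu> s0 a * P s0 a s' * value_fun P r \<gamma> \<nu> s'))"
      unfolding Tp_def Qf_def by (rule sum.cong[OF refl]) (simp add: algebra_simps sum_distrib_left)
    then show ?thesis by (simp only: sum.distrib sum_distrib_left)
  qed
  also have "(\<Sum>a\<in>UNIV. \<Sum>s'\<in>UNIV. \<nu> s0 a * P s0 a s' * value_fun P r \<gamma> \<nu> s')
     = (\<Sum>s'\<in>UNIV. M \<nu> s0 s' * value_fun P r \<gamma> \<nu> s')"
    unfolding M_def by (subst sum.swap) (simp add: sum_distrib_right)
  finally show ?thesis
    unfolding V S0 f_def using ER0[of s0] by (simp add: algebra_simps sum_distrib_left)
qed
end
end


lemma permute_inv1: "bij \<kappa> \<Longrightarrow> permute \<kappa> (permute (inv \<kappa>) x) = x"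
  unfolding permute_def by (simp add: inv_inv_eq bij_is_surj surj_f_inv_f)
lemma permute_inv2: "bij \<kappa> \<Longrightarrow> permute (inv \<kappa>) (permute \<kappa> x) = x"
  unfolding permute_def by (simp add: inv_inv_eq bij_is_inj inv_f_f)
lemma bij_permute: "bij \<kappa> \<Longrightarrow> bij (permute \<kappa>)"
  by (rule o_bij[of "permute (inv \<kappa>)"]) (auto simp: permute_inv1 permute_inv2)
lemma sum_permute: "bij \<kappa> \<Longrightarrow> (\<Sum>x\<in>UNIV. f (permute \<kappa> x)) = (\<Sum>x\<in>UNIV. f x)"
  by (rule sum.reindex_bij_betw) (simp add: bij_permute)

lemma max_le:
  fixes D :: "'x::finite \<Rightarrow> real"
  assumes "0 \<le> \<gamma>" "\<gamma> < 1"
    and H: "\<And>s. \<exists>w. (\<forall>s'. 0 \<le> w s') \<and> sum w UNIV = 1 \<and> D s \<le> \<gamma> * (\<Sum>s'\<in>UNIV. w s' * D s')"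
  shows "D s \<le> 0"
proof -
  define m where "m = Max (range D)"
  have Dm: "D x \<le> m" for x unfolding m_def by (rule Max_ge) auto
  have "m \<in> range D" unfolding m_def by (rule Max_in) auto
  then obtain s1 where s1: "D s1 = m" by auto
  obtain w where w: "\<forall>s'. 0 \<le> w s'" "sum w UNIV = 1" "D s1 \<le> \<gamma> * (\<Sum>s'\<in>UNIV. w s' * D s')"
    using H by blast
  have "(\<Sum>s'\<in>UNIV. w s' * D s') \<le> (\<Sum>s'\<in>UNIV. w s' * m)"
    by (rule sum_mono) (simp add: w(1) Dm mult_left_mono)
  also have "\<dots> = m" using w(2) by (simp add: sum_distrib_right[symmetric])
  finally have "\<gamma> * (\<Sum>s'\<in>UNIV. w s' * D s') \<le> \<gamma> * m" using assms(1) by (rule mult_left_mono)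
  then have "m \<le> \<gamma> * m" using w(3) s1 by simp
  then have "(1 - \<gamma>) * m \<le> 0" by (simp add: algebra_simps)
  then have "m \<le> 0" using assms(2) by (simp add: mult_le_0_iff)
  then show ?thesis using Dm[of s] by simp
qed

context mdp begin

lemma M_nn: "is_policy \<nu> \<Longrightarrow> 0 \<le> M \<nu> s s'"
  unfolding M_def by (auto intro!: sum_nonneg simp: nu_nn P_nn)
lemma M_sum: "is_policy \<nu> \<Longrightarrow> (\<Sum>s'\<in>UNIV. M \<nu> s s') = 1"
  unfolding M_def by (subst sum.swap) (simp add: sum_distrib_left[symmetric] P_sum nu_sum)

lemma Tp_diff: "Tp \<nu> W1 s - Tp \<nu> W2 s = \<gamma> * (\<Sum>s'\<in>UNIV. M \<nu> s s' * (W1 s' - W2 s'))"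
proof -
  have "Tp \<nu> W1 s - Tp \<nu> W2 s = (\<Sum>a\<in>UNIV. \<Sum>s'\<in>UNIV. \<gamma> * (\<nu> s a * P s a s' * (W1 s' - W2 s')))"
    unfolding Tp_def Qf_def
    by (simp add: sum_subtractf[symmetric] sum_distrib_left algebra_simps sum.distrib[symmetric])
  also have "\<dots> = \<gamma> * (\<Sum>s'\<in>UNIV. M \<nu> s s' * (W1 s' - W2 s'))"
    unfolding M_def by (subst sum.swap) (simp add: sum_distrib_left sum_distrib_right mult_ac)
  finally show ?thesis .
qed

lemma Qf_diff: "Qf W1 s a - Qf W2 s a = \<gamma> * (\<Sum>s'\<in>UNIV. P s a s' * (W1 s' - W2 s'))"
proof -
  have e: "(\<Sum>s'\<in>UNIV. P s a s' * (W1 s' - W2 s')) = (\<Sum>s'\<in>UNIV. P s a s' * W1 s') - (\<Sum>s'\<in>UNIV. P s a s' * W2 s')"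
    by (simp add: right_diff_distrib sum_subtractf)
  show ?thesis unfolding Qf_def e by (simp add: right_diff_distrib)
qed

lemma pol_max:
  assumes "is_policy \<nu>" "\<And>s. D s \<le> \<gamma> * (\<Sum>s'\<in>UNIV. M \<nu> s s' * D s')"
  shows "D s \<le> 0"
proof -
  have H: "\<exists>w. (\<forall>s'. 0 \<le> w s') \<and> sum w UNIV = 1 \<and> D s \<le> \<gamma> * (\<Sum>s'\<in>UNIV. w s' * D s')" for s
    using assms M_nn[OF assms(1)] M_sum[OF assms(1)] by (intro exI[of _ "M \<nu> s"]) auto
  show ?thesis using max_le[of \<gamma> D, OF _ _ H] g0 g1 by auto
qed

lemma act_max:
  assumes "\<And>s. \<exists>a. D s \<le> \<gamma> * (\<Sum>s'\<in>UNIV. P s a s' * D s')"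
  shows "D s \<le> 0"
proof -
  have H: "\<exists>w. (\<forall>s'. 0 \<le> w s') \<and> sum w UNIV = 1 \<and> D s \<le> \<gamma> * (\<Sum>s'\<in>UNIV. w s' * D s')" for s
  proof -
    obtain a where "D s \<le> \<gamma> * (\<Sum>s'\<in>UNIV. P s a s' * D s')" using assms by blast
    then show ?thesis using P_nn P_sum by (intro exI[of _ "P s a"]) auto
  qed
  show ?thesis using max_le[of \<gamma> D, OF _ _ H] g0 g1 by auto
qed

lemma unique:
  assumes pol: "is_policy \<nu>" and W: "\<And>s. W s = Tp \<nu> W s"
  shows "W s = value_fun P r \<gamma> \<nu> s"
proof -
  let ?V = "value_fun P r \<gamma> \<nu>"
  have "W s - ?V s \<le> 0"
    by (rule pol_max[OF pol]) (metis W bellman[OF pol] Tp_diff order_refl)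
  moreover have "?V s - W s \<le> 0"
    by (rule pol_max[OF pol]) (metis W bellman[OF pol] Tp_diff order_refl)
  ultimately show ?thesis by simp
qed

lemma improve:
  assumes pol: "is_policy \<nu>" and W: "\<And>s. W s \<le> Tp \<nu> W s"
  shows "W s \<le> value_fun P r \<gamma> \<nu> s"
proof -
  let ?V = "value_fun P r \<gamma> \<nu>"
  have "W s - ?V s \<le> 0"
  proof (rule pol_max[OF pol])
    fix s
    have "W s - ?V s \<le> Tp \<nu> W s - Tp \<nu> ?V s" using W[of s] bellman[OF pol, of s] by simp
    then show "W s - ?V s \<le> \<gamma> * (\<Sum>s'\<in>UNIV. M \<nu> s s' * (W s' - ?V s'))" by (simp add: Tp_diff)
  qed
  then show ?thesis by simp
qed

definition det :: "(('n \<Rightarrow> 's) \<Rightarrow> ('n \<Rightarrow> 'a)) \<Rightarrow> ('n \<Rightarrow> 's) \<Rightarrow> ('n \<Rightarrow> 'a) \<Rightarrow> real" where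
  "det \<pi> s a = (if a = \<pi> s then 1 else 0)"

lemma det_pol: "is_policy (det \<pi>)"
  unfolding is_policy_def det_def by auto

lemma Tp_det: "Tp (det \<pi>) W s = Qf W s (\<pi> s)"
proof -
  have e: "(\<lambda>a. det \<pi> s a * Qf W s a) = (\<lambda>a. if a = \<pi> s then Qf W s a else 0)"
    unfolding det_def by auto
  show ?thesis unfolding Tp_def e by simp
qed

definition Opt where
  "Opt W \<longleftrightarrow> (\<forall>s a. Qf W s a \<le> W s) \<and> (\<forall>s. \<exists>a. Qf W s a = W s)"

lemma opt_ge:
  assumes "Opt W" "is_policy \<mu>"
  shows "value_fun P r \<gamma> \<mu> s \<le> W s"
proof -
  let ?V = "value_fun P r \<gamma> \<mu>"
  have TW: "Tp \<mu> W s \<le> W s" for s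
  proof -
    have "Tp \<mu> W s \<le> (\<Sum>a\<in>UNIV. \<mu> s a * W s)"
      unfolding Tp_def using assms by (intro sum_mono mult_left_mono) (auto simp: Opt_def nu_nn)
    also have "\<dots> = W s" using nu_sum[OF assms(2)] by (simp add: sum_distrib_right[symmetric])
    finally show ?thesis .
  qed
  have "?V s - W s \<le> 0"
  proof (rule pol_max[OF assms(2)])
    fix s
    have "?V s - W s \<le> Tp \<mu> ?V s - Tp \<mu> W s" using TW[of s] bellman[OF assms(2), of s] by simp
    then show "?V s - W s \<le> \<gamma> * (\<Sum>s'\<in>UNIV. M \<mu> s s' * (?V s' - W s'))" by (simp add: Tp_diff)
  qed
  then show ?thesis by simp
qed

lemma opt_unique:
  assumes "Opt W1" "Opt W2"
  shows "W1 s \<le> W2 s"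
proof -
  have "W1 s - W2 s \<le> 0"
  proof (rule act_max)
    fix s
    obtain a where a: "Qf W1 s a = W1 s" using assms(1) unfolding Opt_def by blast
    have "Qf W2 s a \<le> W2 s" using assms(2) unfolding Opt_def by blast
    then have "W1 s - W2 s \<le> Qf W1 s a - Qf W2 s a" using a by simp
    then show "\<exists>a. W1 s - W2 s \<le> \<gamma> * (\<Sum>s'\<in>UNIV. P s a s' * (W1 s' - W2 s'))"
      by (auto simp: Qf_diff)
  qed
  then show ?thesis by simp
qed

lemma opt_exists: "\<exists>W. Opt W"
proof -
  define F where "F \<pi> = (\<Sum>s\<in>UNIV. value_fun P r \<gamma> (det \<pi>) s)" for \<pi>
  have "F ` UNIV \<noteq> {}" "finite (F ` UNIV)" by auto
  then have "Max (F ` UNIV) \<in> F ` UNIV" using Max_in by blast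
  then obtain \<pi> where \<pi>: "F \<pi> = Max (F ` UNIV)" by (metis imageE)
  have max: "F \<pi>' \<le> F \<pi>" for \<pi>' unfolding \<pi> by (rule Max_ge) auto
  define W where "W = value_fun P r \<gamma> (det \<pi>)"
  have Wb: "W s = Qf W s (\<pi> s)" for s
    unfolding W_def by (subst bellman[OF det_pol]) (simp add: Tp_det)
  have "Qf W s0 a0 \<le> W s0" for s0 a0
  proof (rule ccontr)
    assume c: "\<not> Qf W s0 a0 \<le> W s0"
    define \<pi>' where "\<pi>' = \<pi>(s0 := a0)"
    define V' where "V' = value_fun P r \<gamma> (det \<pi>')"
    have le: "W s \<le> Tp (det \<pi>') W s" for s
      unfolding Tp_det \<pi>'_def using c Wb[of s] by (cases "s = s0") auto
    have WV: "W s \<le> V' s" for s unfolding V'_def by (rule improve[OF det_pol le])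
    have "Qf W s0 a0 \<le> Qf V' s0 a0"
    proof -
      have "0 \<le> \<gamma> * (\<Sum>s'\<in>UNIV. P s0 a0 s' * (V' s' - W s'))"
        using g0 WV by (intro mult_nonneg_nonneg sum_nonneg) (auto simp: P_nn)
      then show ?thesis using Qf_diff[of V' s0 a0 W] by simp
    qed
    also have "Qf V' s0 a0 = V' s0"
    proof -
      have "V' s0 = Tp (det \<pi>') V' s0" unfolding V'_def by (rule bellman[OF det_pol])
      then show ?thesis by (simp add: Tp_det \<pi>'_def)
    qed
    finally have "W s0 < V' s0" using c by simp
    then have "F \<pi> < F \<pi>'"
      unfolding F_def W_def[symmetric] V'_def[symmetric]
      by (intro sum_strict_mono_ex1) (auto simp: WV)
    then show False using max[of \<pi>'] by simp
  qed
  then have "Opt W" unfolding Opt_def using Wb by metis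
  then show ?thesis by blast
qed

end


locale sym_mdp = mdp P r \<gamma>
  for P :: "('n::finite \<Rightarrow> 's::finite) \<Rightarrow> ('n \<Rightarrow> 'a::finite) \<Rightarrow> ('n \<Rightarrow> 's) \<Rightarrow> real"
    and r :: "('n \<Rightarrow> 's) \<Rightarrow> ('n \<Rightarrow> 'a) \<Rightarrow> real" and \<gamma> :: real +
  assumes r_inv: "\<And>\<kappa> s a. bij \<kappa> \<Longrightarrow> r s a = r (permute \<kappa> s) (permute \<kappa> a)"
    and P_inv: "\<And>\<kappa> s a s'. bij \<kappa> \<Longrightarrow> P s a s' = P (permute \<kappa> s) (permute \<kappa> a) (permute \<kappa> s')"
begin

lemma Qf_perm:
  assumes k: "bij \<kappa>"
  shows "Qf W (permute \<kappa> s) (permute \<kappa> a) = Qf (\<lambda>x. W (permute \<kappa> x)) s a"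
proof -
  have "(\<Sum>s'\<in>UNIV. P (permute \<kappa> s) (permute \<kappa> a) s' * W s')
      = (\<Sum>s'\<in>UNIV. P (permute \<kappa> s) (permute \<kappa> a) (permute \<kappa> s') * W (permute \<kappa> s'))"
    by (rule sum_permute[OF k, symmetric])
  also have "\<dots> = (\<Sum>s'\<in>UNIV. P s a s' * W (permute \<kappa> s'))"
    using P_inv[OF k, symmetric] by simp
  finally show ?thesis unfolding Qf_def using r_inv[OF k, of s a, symmetric] by simp
qed

lemma Opt_perm:
  assumes k: "bij \<kappa>" and W: "Opt W"
  shows "Opt (\<lambda>x. W (permute \<kappa> x))"
  unfolding Opt_def
proof (intro conjI allI)
  fix s a
  show "Qf (\<lambda>x. W (permute \<kappa> x)) s a \<le> W (permute \<kappa> s)"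
    using W unfolding Opt_def Qf_perm[OF k, symmetric] by blast
next
  fix s
  obtain a' where a': "Qf W (permute \<kappa> s) a' = W (permute \<kappa> s)" using W unfolding Opt_def by blast
  have "Qf (\<lambda>x. W (permute \<kappa> x)) s (permute (inv \<kappa>) a') = W (permute \<kappa> s)"
    unfolding Qf_perm[OF k, symmetric] permute_inv1[OF k] by (rule a')
  then show "\<exists>a. Qf (\<lambda>x. W (permute \<kappa> x)) s a = W (permute \<kappa> s)" by blast
qed

lemma Opt_inv:
  assumes k: "bij \<kappa>" and W: "Opt W"
  shows "W (permute \<kappa> s) = W s"
proof (rule order_antisym)
  show "W (permute \<kappa> s) \<le> W s" by (rule opt_unique[OF Opt_perm[OF k W] W])
  show "W s \<le> W (permute \<kappa> s)" by (rule opt_unique[OF W Opt_perm[OF k W]])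
qed

lemma part1: "\<exists>\<nu>. optimal_policy P r \<gamma> \<nu> \<and> perm_invariant_policy \<nu>"
proof -
  obtain W where W: "Opt W" using opt_exists by blast
  define A where "A s = {a. Qf W s a = W s}" for s
  define \<nu> where "\<nu> s a = (if a \<in> A s then 1 / real (card (A s)) else 0)" for s a
  have Ane: "A s \<noteq> {}" for s using W unfolding Opt_def A_def by auto
  have Acard: "card (A s) > 0" for s using Ane[of s] by (simp add: card_gt_0_iff)
  have sum_if: "(\<Sum>a\<in>UNIV. \<nu> s a * f a) = (\<Sum>a\<in>A s. f a) / real (card (A s))" for s f
  proof -
    have "(\<Sum>a\<in>UNIV. \<nu> s a * f a) = (\<Sum>a\<in>UNIV. if a \<in> A s then f a / real (card (A s)) else 0)"
      unfolding \<nu>_def by (rule sum.cong) auto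
    also have "\<dots> = (\<Sum>a\<in>A s. f a / real (card (A s)))"
      by (simp add: sum.If_cases)
    finally show ?thesis by (simp add: sum_divide_distrib)
  qed
  have pol: "is_policy \<nu>"
    unfolding is_policy_def
  proof (intro conjI allI)
    fix s a show "0 \<le> \<nu> s a" unfolding \<nu>_def by simp
  next
    fix s
    have "(\<Sum>a\<in>UNIV. \<nu> s a) = (\<Sum>a\<in>UNIV. \<nu> s a * 1)" by simp
    also have "\<dots> = 1" unfolding sum_if using Acard[of s] Ane[of s] by simp
    finally show "(\<Sum>a\<in>UNIV. \<nu> s a) = 1" .
  qed
  have T: "W s = Tp \<nu> W s" for s
  proof -
    have "Tp \<nu> W s = (\<Sum>a\<in>A s. Qf W s a) / real (card (A s))" unfolding Tp_def sum_if ..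
    also have "(\<Sum>a\<in>A s. Qf W s a) = (\<Sum>a\<in>A s. W s)" by (rule sum.cong) (auto simp: A_def)
    finally show ?thesis using Acard[of s] Ane[of s] by simp
  qed
  have V: "W s = value_fun P r \<gamma> \<nu> s" for s by (rule unique[OF pol T])
  have opt: "optimal_policy P r \<gamma> \<nu>"
    unfolding optimal_policy_def using pol opt_ge[OF W] V by simp
  have inv: "perm_invariant_policy \<nu>"
    unfolding perm_invariant_policy_def
  proof (intro allI impI)
    fix \<kappa> :: "'n \<Rightarrow> 'n" and s :: "'n \<Rightarrow> 's" and a :: "'n \<Rightarrow> 'a"
    assume k: "bij \<kappa>"
    have Wk: "(\<lambda>x. W (permute \<kappa> x)) = W" using Opt_inv[OF k W] by auto
    have Qk: "Qf W (permute \<kappa> s) (permute \<kappa> b) = Qf W s b" for b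
      using Qf_perm[OF k, of W s b] Wk by simp
    have "A (permute \<kappa> s) = permute \<kappa> ` A s"
    proof (intro set_eqI iffI)
      fix x assume "x \<in> A (permute \<kappa> s)"
      then have "permute (inv \<kappa>) x \<in> A s"
        unfolding A_def using Qk[of "permute (inv \<kappa>) x"] Opt_inv[OF k W, of s]
        by (simp add: permute_inv1[OF k])
      then show "x \<in> permute \<kappa> ` A s" by (metis image_eqI permute_inv1[OF k])
    next
      fix x assume "x \<in> permute \<kappa> ` A s"
      then show "x \<in> A (permute \<kappa> s)"
        unfolding A_def using Qk Opt_inv[OF k W, of s] by auto
    qed
    then have cA: "card (A (permute \<kappa> s)) = card (A s)"
      using card_image[OF inj_on_subset[OF bij_is_inj[OF bij_permute[OF k]] subset_UNIV]] by simp
    have mem: "permute \<kappa> a \<in> A (permute \<kappa> s) \<longleftrightarrow> a \<in> A s"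
      unfolding A_def using Qk[of a] Opt_inv[OF k W, of s] by simp
    show "\<nu> s a = \<nu> (permute \<kappa> s) (permute \<kappa> a)"
      unfolding \<nu>_def mem cA ..
  qed
  show ?thesis using opt inv by blast
qed

lemma part2:
  assumes pol: "is_policy \<nu>" and inv: "perm_invariant_policy \<nu>" and k: "bij \<kappa>"
  shows "value_fun P r \<gamma> \<nu> s = value_fun P r \<gamma> \<nu> (permute \<kappa> s)
       \<and> q_fun P r \<gamma> \<nu> s a = q_fun P r \<gamma> \<nu> (permute \<kappa> s) (permute \<kappa> a)"
proof -
  let ?V = "value_fun P r \<gamma> \<nu>"
  have nu_k: "\<nu> (permute \<kappa> x) (permute \<kappa> b) = \<nu> x b" for x b
    using inv k unfolding perm_invariant_policy_def by metis
  have T: "?V (permute \<kappa> x) = Tp \<nu> (\<lambda>y. ?V (permute \<kappa> y)) x" for x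
  proof -
    have "Tp \<nu> (\<lambda>y. ?V (permute \<kappa> y)) x = (\<Sum>b\<in>UNIV. \<nu> (permute \<kappa> x) (permute \<kappa> b) * Qf ?V (permute \<kappa> x) (permute \<kappa> b))"
      unfolding Tp_def by (simp add: nu_k Qf_perm[OF k])
    also have "\<dots> = Tp \<nu> ?V (permute \<kappa> x)"
      unfolding Tp_def by (rule sum_permute[OF k])
    also have "\<dots> = ?V (permute \<kappa> x)" by (rule bellman[OF pol, symmetric])
    finally show ?thesis ..
  qed
  have Vk: "?V (permute \<kappa> x) = ?V x" for x by (rule unique[OF pol T])
  have "q_fun P r \<gamma> \<nu> (permute \<kappa> s) (permute \<kappa> a)
     = (\<Sum>s'\<in>UNIV. P (permute \<kappa> s) (permute \<kappa> a) (permute \<kappa> s') * (r (permute \<kappa> s) (permute \<kappa> a) + \<gamma> * ?V (permute \<kappa> s')))"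
    unfolding q_fun_def by (rule sum_permute[OF k, symmetric])
  also have "\<dots> = q_fun P r \<gamma> \<nu> s a"
    unfolding q_fun_def using P_inv[OF k, symmetric] r_inv[OF k, symmetric] Vk by simp
  finally show ?thesis using Vk[of s] by simp
qed

end

theorem proposition1:
  fixes P :: "('n::finite \<Rightarrow> 's::finite) \<Rightarrow> ('n \<Rightarrow> 'a::finite) \<Rightarrow> ('n \<Rightarrow> 's) \<Rightarrow> real"
    and r :: "('n \<Rightarrow> 's) \<Rightarrow> ('n \<Rightarrow> 'a) \<Rightarrow> real"
    and \<gamma> :: real
  assumes "0 < \<gamma>" and "\<gamma> < 1"
    and "is_kernel P"
    and r_inv: "\<And>\<kappa> s a. bij \<kappa> \<Longrightarrow> r s a = r (permute \<kappa> s) (permute \<kappa> a)"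
    and P_inv: "\<And>\<kappa> s a s'. bij \<kappa> \<Longrightarrow>
                  P s a s' = P (permute \<kappa> s) (permute \<kappa> a) (permute \<kappa> s')"
  shows "(\<exists>\<nu>. optimal_policy P r \<gamma> \<nu> \<and> perm_invariant_policy \<nu>)
       \<and> (\<forall>\<nu>. is_policy \<nu> \<and> perm_invariant_policy \<nu> \<longrightarrow>
            (\<forall>\<kappa> s a. bij \<kappa> \<longrightarrow>
               value_fun P r \<gamma> \<nu> s = value_fun P r \<gamma> \<nu> (permute \<kappa> s)
             \<and> q_fun P r \<gamma> \<nu> s a = q_fun P r \<gamma> \<nu> (permute \<kappa> s) (permute \<kappa> a)))"
proof -
  interpret sym_mdp P r \<gamma>
    by unfold_locales (rule assms(1), rule assms(2), rule assms(3), rule r_inv, assumption, rule P_inv, assumption)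
  show ?thesis using part1 part2 by blast
qed

end
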